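(* Let $1\le p<\infty$, $X\subset L^p_+(\mathbb{R}^n)$, let $T:\mathcal V(\mathbb{R}^n)\to\mathcal V(\mathbb{R}^n)$ be a rearrangement and let $\mathcal W$ be a family of rearrangements from $\mathcal V(\mathbb{R}^n)$ to $\mathcal V(\mathbb{R}^n)$. Then $T$ is weakly approximable in $L^p$ on $X$ by maps in $\mathcal W$ if and only if $T$ is weakly approximable in $L^p$ on the $L^p$-closure of $X$ by maps in $\mathcal W$. The same equivalence holds with "weakly approximable" replaced throughout by "approximable" or by "sequentially approximable".
   Context: $\mathcal V(\mathbb{R}^n)$: nonnegative measurable $f$ on $\mathbb{R}^n$ with $\mathcal H^n(\{f>t\})<\infty$ for all $t>0$; $L^p_+(\mathbb{R}^n)$: nonnegative functions in $L^p$. A rearrangement is an equimeasurable ($\mathcal H^n(\{Tf>t\})=\mathcal H^n(\{f>t\})$ for all $t$) and monotonic ($f\le g$ a.e. implies $Tf\le Tg$ a.e.) map. $T$ is approximable in $L^p$ on $X$ by $\mathcal W$ if there are $T_k\in\mathcal W$ with $\|T_kf-Tf\|_p\to0$ for all $f\in X$; weakly approximable if the $T_k$ may depend on $f$; sequentially approximable if $T_k=S_k\circ\cdots\circ S_1$ for a fixed sequence $(S_k)$ in $\mathcal W$. *)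

theory Defs
  imports "HOL-Analysis.Analysis"
begin

definition V_class :: "('a::euclidean_space \<Rightarrow> real) set" where
  "V_class = {f. f \<in> borel_measurable lebesgue \<and> (\<forall>x. 0 \<le> f x) \<and>
      (\<forall>t>0. emeasure lebesgue {x. f x > t} < \<infinity>)}"

definition lp_norm :: "real \<Rightarrow> ('a::euclidean_space \<Rightarrow> real) \<Rightarrow> ennreal" where
  "lp_norm p f =
     (let I = (\<integral>\<^sup>+ x. ennreal (\<bar>f x\<bar> powr p) \<partial>lebesgue)
      in if I = \<infinity> then \<infinity> else ennreal ((enn2real I) powr (1 / p)))"

definition Lp_plus :: "real \<Rightarrow> ('a::euclidean_space \<Rightarrow> real) set" where
  "Lp_plus p = {f. f \<in> borel_measurable lebesgue \<and> (\<forall>x. 0 \<le> f x) \<and> lp_norm p f < \<infinity>}"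

text \<open>The L^p-closure of a set of nonnegative L^p functions, taken inside L^p_+
  (which is closed in L^p), as a set of representatives.\<close>
definition Lp_closure :: "real \<Rightarrow> ('a::euclidean_space \<Rightarrow> real) set \<Rightarrow> ('a \<Rightarrow> real) set" where
  "Lp_closure p X = {f \<in> Lp_plus p. \<exists>g::nat \<Rightarrow> 'a \<Rightarrow> real. (\<forall>k. g k \<in> X) \<and>
      ((\<lambda>k. lp_norm p (\<lambda>x. g k x - f x)) \<longlongrightarrow> 0) sequentially}"

definition rearrangement :: "(('a::euclidean_space \<Rightarrow> real) \<Rightarrow> ('a \<Rightarrow> real)) \<Rightarrow> bool" where
  "rearrangement T \<longleftrightarrow>
     (\<forall>f\<in>V_class. T f \<in> V_class) \<and>
     (\<forall>f\<in>V_class. \<forall>t::real. emeasure lebesgue {x. T f x > t} = emeasure lebesgue {x. f x > t}) \<and>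
     (\<forall>f\<in>V_class. \<forall>g\<in>V_class. (AE x in lebesgue. f x \<le> g x) \<longrightarrow>
        (AE x in lebesgue. T f x \<le> T g x))"

definition approximable ::
  "real \<Rightarrow> ('a::euclidean_space \<Rightarrow> real) set \<Rightarrow> (('a \<Rightarrow> real) \<Rightarrow> ('a \<Rightarrow> real)) set
     \<Rightarrow> (('a \<Rightarrow> real) \<Rightarrow> ('a \<Rightarrow> real)) \<Rightarrow> bool" where
  "approximable p X W T \<longleftrightarrow>
     (\<exists>Tk::nat \<Rightarrow> ('a \<Rightarrow> real) \<Rightarrow> ('a \<Rightarrow> real). (\<forall>k. Tk k \<in> W) \<and>
        (\<forall>f\<in>X. ((\<lambda>k. lp_norm p (\<lambda>x. Tk k f x - T f x)) \<longlongrightarrow> 0) sequentially))"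

definition weakly_approximable ::
  "real \<Rightarrow> ('a::euclidean_space \<Rightarrow> real) set \<Rightarrow> (('a \<Rightarrow> real) \<Rightarrow> ('a \<Rightarrow> real)) set
     \<Rightarrow> (('a \<Rightarrow> real) \<Rightarrow> ('a \<Rightarrow> real)) \<Rightarrow> bool" where
  "weakly_approximable p X W T \<longleftrightarrow>
     (\<forall>f\<in>X. \<exists>Tk::nat \<Rightarrow> ('a \<Rightarrow> real) \<Rightarrow> ('a \<Rightarrow> real). (\<forall>k. Tk k \<in> W) \<and>
        ((\<lambda>k. lp_norm p (\<lambda>x. Tk k f x - T f x)) \<longlongrightarrow> 0) sequentially)"

fun comp_upto :: "(nat \<Rightarrow> 'b \<Rightarrow> 'b) \<Rightarrow> nat \<Rightarrow> 'b \<Rightarrow> 'b" where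
  "comp_upto S 0 = S 0"
| "comp_upto S (Suc k) = S (Suc k) \<circ> comp_upto S k"

definition sequentially_approximable ::
  "real \<Rightarrow> ('a::euclidean_space \<Rightarrow> real) set \<Rightarrow> (('a \<Rightarrow> real) \<Rightarrow> ('a \<Rightarrow> real)) set
     \<Rightarrow> (('a \<Rightarrow> real) \<Rightarrow> ('a \<Rightarrow> real)) \<Rightarrow> bool" where
  "sequentially_approximable p X W T \<longleftrightarrow>
     (\<exists>S::nat \<Rightarrow> ('a \<Rightarrow> real) \<Rightarrow> ('a \<Rightarrow> real). (\<forall>k. S k \<in> W) \<and>
        (\<forall>f\<in>X. ((\<lambda>k. lp_norm p (\<lambda>x. comp_upto S k f x - T f x)) \<longlongrightarrow> 0) sequentially))"

end

theory Submission imports Defs begin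
lemma sf_leb: "sigma_finite_measure (lebesgue :: 'a::euclidean_space measure)"
proof -
  obtain A :: "'a set set" where "countable A" "A \<subseteq> sets lborel" "\<Union>A = space lborel" "\<forall>a\<in>A. emeasure lborel a \<noteq> \<infinity>"
    using lborel.sigma_finite_countable by blast
  then show ?thesis unfolding sigma_finite_measure_def
    by (intro exI[of _ A]) auto
qed

lemma psf: "pair_sigma_finite (lebesgue :: 'a::euclidean_space measure) (lborel :: real measure)"
  by (intro pair_sigma_finite.intro sf_leb sigma_finite_lborel)

lemma layer_cake:
  fixes w :: "'a::euclidean_space \<Rightarrow> real"
  assumes [measurable]: "w \<in> borel_measurable lebesgue" and nn: "\<And>x. 0 \<le> w x"
  shows "(\<integral>\<^sup>+x. ennreal (w x) \<partial>lebesgue) =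
     (\<integral>\<^sup>+t. indicator {0<..} t * emeasure lebesgue {x. w x > t} \<partial>lborel)"
proof -
  define f where "f = (\<lambda>x (t::real). indicator {z. 0 < snd z \<and> snd z < w (fst z)} (x,t) :: ennreal)"
  have fm: "(\<lambda>(x,t). f x t) \<in> borel_measurable (lebesgue \<Otimes>\<^sub>M lborel)"
    unfolding f_def by measurable
  have 1: "ennreal (w x) = (\<integral>\<^sup>+t. f x t \<partial>lborel)" for x
  proof -
    have "f x = indicator {0<..<w x}" unfolding f_def by (auto simp: indicator_def)
    then show ?thesis using nn[of x] by (simp add: emeasure_lborel_Ioo)
  qed
  have 2: "(\<integral>\<^sup>+x. f x t \<partial>lebesgue) = indicator {0<..} t * emeasure lebesgue {x. w x > t}" for t
  proof (cases "0 < t")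
    case True
    have "(\<lambda>x. f x t) = indicator {x. w x > t}" using True unfolding f_def by (auto simp: indicator_def)
    moreover have "{x\<in>space lebesgue. w x > t} \<in> sets lebesgue" by measurable
    then have "{x. w x > t} \<in> sets lebesgue" by simp
    ultimately show ?thesis using True by simp
  next
    case False
    have "(\<lambda>x. f x t) = (\<lambda>x. 0)" using False unfolding f_def by (auto simp: indicator_def)
    then show ?thesis using False by simp
  qed
  have "(\<integral>\<^sup>+x. ennreal (w x) \<partial>lebesgue) = (\<integral>\<^sup>+x. (\<integral>\<^sup>+t. f x t \<partial>lborel) \<partial>lebesgue)"
    using 1 by simp
  also have "\<dots> = (\<integral>\<^sup>+t. (\<integral>\<^sup>+x. f x t \<partial>lebesgue) \<partial>lborel)"
    using pair_sigma_finite.Fubini'[OF psf fm] by simp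
  also have "\<dots> = (\<integral>\<^sup>+t. indicator {0<..} t * emeasure lebesgue {x. w x > t} \<partial>lborel)"
    using 2 by simp
  finally show ?thesis .
qed
lemma powr_le_self: fixes x p :: real assumes "0 \<le> x" "x \<le> 1" "1 \<le> p" shows "x powr p \<le> x"
  by (metis assms(1,2,3) powr_mono' powr_one_gt_zero_iff)

lemma level_powr: fixes a t p :: real assumes a: "0 \<le> a" and t: "0 < t" and p: "0 < p"
  shows "t < a powr p \<longleftrightarrow> t powr (1/p) < a"
proof -
  have e: "(t powr (1/p)) powr p = t" using t p by (simp add: powr_powr)
  show ?thesis
  proof
    assume "t < a powr p"
    show "t powr (1/p) < a"
    proof (rule ccontr)
      assume "\<not> t powr (1/p) < a"
      then have "a powr p \<le> (t powr (1/p)) powr p" using a p by (intro powr_mono2) auto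
      with e \<open>t < a powr p\<close> show False by simp
    qed
  next
    assume "t powr (1/p) < a"
    then have "(t powr (1/p)) powr p < a powr p" using p by (intro powr_less_mono2) auto
    with e show "t < a powr p" by simp
  qed
qed

lemma powr_diff_le: fixes a b p :: real assumes "0 \<le> a" "a \<le> b" "1 \<le> p"
  shows "(b - a) powr p \<le> b powr p - a powr p"
proof (cases "b = 0")
  case True then show ?thesis using assms by simp
next
  case False
  then have b: "0 < b" using assms by simp
  define s where "s = a / b"
  have s: "0 \<le> s" "s \<le> 1" using assms b by (auto simp: s_def)
  have "b - a = b * (1 - s)" "a = b * s" using b by (auto simp: s_def field_simps)
  then have "(b - a) powr p = b powr p * (1 - s) powr p" "a powr p = b powr p * s powr p"
    using s b by (simp_all add: powr_mult)
  moreover have "(1 - s) powr p \<le> 1 - s" "s powr p \<le> s" using s assms by (auto intro: powr_le_self)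
  moreover have "0 \<le> b powr p" by simp
  ultimately have "(b - a) powr p + a powr p \<le> b powr p * (1 - s) + b powr p * s"
    by (metis add_mono mult_left_mono)
  also have "\<dots> = b powr p" by (simp add: algebra_simps)
  finally show ?thesis by simp
qed
lemma V_facts:
  assumes "f \<in> V_class"
  shows "f \<in> borel_measurable lebesgue" "\<And>x. 0 \<le> f x"
    "\<And>t. 0 < t \<Longrightarrow> emeasure lebesgue {x. f x > t} < \<infinity>"
  using assms unfolding V_class_def by auto

lemma rearr_V: "rearrangement S \<Longrightarrow> f \<in> V_class \<Longrightarrow> S f \<in> V_class"
  unfolding rearrangement_def by auto

lemma rearr_int:
  fixes h :: "'a::euclidean_space \<Rightarrow> real"
  assumes S: "rearrangement S" and h: "h \<in> V_class" and p: "0 < p"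
  shows "(\<integral>\<^sup>+x. ennreal (S h x powr p) \<partial>lebesgue) = (\<integral>\<^sup>+x. ennreal (h x powr p) \<partial>lebesgue)"
proof -
  have Sh: "S h \<in> V_class" using rearr_V[OF S h] .
  note [measurable] = V_facts(1)[OF Sh] V_facts(1)[OF h]
  have m1: "(\<lambda>x. S h x powr p) \<in> borel_measurable lebesgue" "(\<lambda>x. h x powr p) \<in> borel_measurable lebesgue"
     apply measurable
    done
  have eq: "emeasure lebesgue {x. S h x > t} = emeasure lebesgue {x. h x > t}" for t
    using S h unfolding rearrangement_def by auto
  have lv: "{x. S h x powr p > t} = {x. S h x > t powr (1/p)}" "{x. h x powr p > t} = {x. h x > t powr (1/p)}"
    if "0 < t" for t
    using level_powr[OF V_facts(2)[OF Sh] that p] level_powr[OF V_facts(2)[OF h] that p] by auto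
  have "(\<integral>\<^sup>+x. ennreal (S h x powr p) \<partial>lebesgue) =
     (\<integral>\<^sup>+t. indicator {0<..} t * emeasure lebesgue {x. S h x powr p > t} \<partial>lborel)"
    by (rule layer_cake[OF m1(1)]) simp
  also have "\<dots> = (\<integral>\<^sup>+t. indicator {0<..} t * emeasure lebesgue {x. h x powr p > t} \<partial>lborel)"
  proof (rule nn_integral_cong)
    fix t :: real
    show "indicator {0<..} t * emeasure lebesgue {x. S h x powr p > t} =
          indicator {0<..} t * emeasure lebesgue {x. h x powr p > t}"
    proof (cases "0 < t")
      case True
      have "emeasure lebesgue {x. S h x powr p > t} = emeasure lebesgue {x. h x powr p > t}"
        unfolding lv[OF True] by (rule eq)
      then show ?thesis by (rule arg_cong)
    next
      case False
      then show ?thesis by (simp add: indicator_def)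
    qed
  qed
  also have "\<dots> = (\<integral>\<^sup>+x. ennreal (h x powr p) \<partial>lebesgue)"
    by (rule layer_cake[OF m1(2), symmetric]) simp
  finally show ?thesis .
qed


definition Np :: "real \<Rightarrow> ('a::euclidean_space \<Rightarrow> real) \<Rightarrow> ennreal" where
  "Np p h = (\<integral>\<^sup>+x. ennreal (\<bar>h x\<bar> powr p) \<partial>lebesgue)"

lemma set_leb: fixes u :: "'a::euclidean_space \<Rightarrow> real" shows "u \<in> borel_measurable lebesgue \<Longrightarrow> {x. t < u x} \<in> sets lebesgue"
proof -
  assume [measurable]: "u \<in> borel_measurable lebesgue"
  have "{x\<in>space lebesgue. t < u x} \<in> sets lebesgue" by measurable
  then show ?thesis by simp
qed

lemma rearr_mono:
  assumes "rearrangement S" "u \<in> V_class" "v \<in> V_class" "\<And>x. u x \<le> v x"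
  shows "AE x in lebesgue. S u x \<le> S v x"
  using assms unfolding rearrangement_def by auto

lemma key:
  fixes f g :: "'a::euclidean_space \<Rightarrow> real"
  assumes p: "1 \<le> p" and S: "rearrangement S" and f: "f \<in> V_class" and g: "g \<in> V_class"
    and fin: "(\<integral>\<^sup>+x. ennreal (f x powr p) \<partial>lebesgue) \<noteq> \<infinity>"
  shows "Np p (\<lambda>x. S f x - S g x) \<le> (\<integral>\<^sup>+x. ennreal \<bar>f x powr p - g x powr p\<bar> \<partial>lebesgue)"
proof -
  define m where "m = (\<lambda>x. min (f x) (g x))"
  define M where "M = (\<lambda>x. max (f x) (g x))"
  note [measurable] = V_facts(1)[OF f] V_facts(1)[OF g]
  have f0: "0 \<le> f x" "0 \<le> g x" for x using V_facts(2)[OF f] V_facts(2)[OF g] by auto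
  have mV: "m \<in> V_class"
  proof -
    have "m \<in> borel_measurable lebesgue" unfolding m_def by measurable
    moreover have "0 \<le> m x" for x using f0 by (simp add: m_def)
    moreover have "emeasure lebesgue {x. m x > t} < \<infinity>" if "0 < t" for t
    proof -
      have "emeasure lebesgue {x. m x > t} \<le> emeasure lebesgue {x. f x > t}"
        by (rule emeasure_mono) (auto simp: m_def intro: set_leb V_facts(1)[OF f])
      also have "\<dots> < \<infinity>" using V_facts(3)[OF f that] .
      finally show ?thesis .
    qed
    ultimately show ?thesis unfolding V_class_def by auto
  qed
  have MV: "M \<in> V_class"
  proof -
    have "M \<in> borel_measurable lebesgue" unfolding M_def by measurable
    moreover have "0 \<le> M x" for x using f0 by (simp add: M_def max.coboundedI1)
    moreover have "emeasure lebesgue {x. M x > t} < \<infinity>" if "0 < t" for t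
    proof -
      have "{x. M x > t} = {x. f x > t} \<union> {x. g x > t}" by (auto simp: M_def)
      have "emeasure lebesgue ({x. f x > t} \<union> {x. g x > t}) \<le> emeasure lebesgue {x. f x > t} + emeasure lebesgue {x. g x > t}"
        by (rule emeasure_subadditive) (auto intro: set_leb V_facts(1)[OF f] V_facts(1)[OF g])
      then have "emeasure lebesgue {x. M x > t} \<le> emeasure lebesgue {x. f x > t} + emeasure lebesgue {x. g x > t}"
        unfolding \<open>{x. M x > t} = {x. f x > t} \<union> {x. g x > t}\<close> .
      also have "\<dots> < \<infinity>" using V_facts(3)[OF f that] V_facts(3)[OF g that] by simp
      finally show ?thesis .
    qed
    ultimately show ?thesis unfolding V_class_def by auto
  qed
  have SmV: "S m \<in> V_class" and SMV: "S M \<in> V_class" using rearr_V[OF S] mV MV by auto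
  note [measurable] = V_facts(1)[OF SmV] V_facts(1)[OF SMV] V_facts(1)[OF rearr_V[OF S f]] V_facts(1)[OF rearr_V[OF S g]]
  have Sm0: "0 \<le> S m x" for x using V_facts(2)[OF SmV] by auto
  have a1: "AE x in lebesgue. S m x \<le> S f x" by (rule rearr_mono[OF S mV f]) (simp add: m_def)
  have a2: "AE x in lebesgue. S m x \<le> S g x" by (rule rearr_mono[OF S mV g]) (simp add: m_def)
  have a3: "AE x in lebesgue. S f x \<le> S M x" by (rule rearr_mono[OF S f MV]) (simp add: M_def)
  have a4: "AE x in lebesgue. S g x \<le> S M x" by (rule rearr_mono[OF S g MV]) (simp add: M_def)
  define DS where "DS = (\<integral>\<^sup>+x. ennreal (S M x powr p - S m x powr p) \<partial>lebesgue)"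
  define D where "D = (\<integral>\<^sup>+x. ennreal \<bar>f x powr p - g x powr p\<bar> \<partial>lebesgue)"
  have "Np p (\<lambda>x. S f x - S g x) \<le> DS"
    unfolding Np_def DS_def
  proof (rule nn_integral_mono_AE)
    show "AE x in lebesgue. ennreal (\<bar>S f x - S g x\<bar> powr p) \<le> ennreal (S M x powr p - S m x powr p)"
      using a1 a2 a3 a4
    proof eventually_elim
      case (elim x)
      have "\<bar>S f x - S g x\<bar> \<le> S M x - S m x" using elim by linarith
      then have "\<bar>S f x - S g x\<bar> powr p \<le> (S M x - S m x) powr p" using p by (intro powr_mono2) auto
      also have "\<dots> \<le> S M x powr p - S m x powr p"
        using elim Sm0[of x] p by (intro powr_diff_le) auto
      finally show ?case by (rule ennreal_leI)
    qed
  qed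
  moreover have sumS: "(\<integral>\<^sup>+x. ennreal (S M x powr p) \<partial>lebesgue) = (\<integral>\<^sup>+x. ennreal (S m x powr p) \<partial>lebesgue) + DS"
  proof -
    have "(\<integral>\<^sup>+x. ennreal (S M x powr p) \<partial>lebesgue) =
        (\<integral>\<^sup>+x. ennreal (S m x powr p) + ennreal (S M x powr p - S m x powr p) \<partial>lebesgue)"
    proof (rule nn_integral_cong_AE)
      show "AE x in lebesgue. ennreal (S M x powr p) = ennreal (S m x powr p) + ennreal (S M x powr p - S m x powr p)"
        using a1 a3
      proof eventually_elim
        case (elim x)
        have "S m x powr p \<le> S M x powr p" using elim Sm0[of x] p by (intro powr_mono2) auto
        then show ?case by (subst ennreal_plus[symmetric]) auto
      qed
    qed
    also have "\<dots> = (\<integral>\<^sup>+x. ennreal (S m x powr p) \<partial>lebesgue) + DS"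
      unfolding DS_def by (rule nn_integral_add) measurable
    finally show ?thesis .
  qed
  moreover have sum0: "(\<integral>\<^sup>+x. ennreal (M x powr p) \<partial>lebesgue) = (\<integral>\<^sup>+x. ennreal (m x powr p) \<partial>lebesgue) + D"
  proof -
    have "(\<integral>\<^sup>+x. ennreal (M x powr p) \<partial>lebesgue) =
        (\<integral>\<^sup>+x. ennreal (m x powr p) + ennreal \<bar>f x powr p - g x powr p\<bar> \<partial>lebesgue)"
    proof (rule nn_integral_cong)
      fix x
      have "M x powr p = m x powr p + \<bar>f x powr p - g x powr p\<bar>"
      proof (cases "f x \<le> g x")
        case True
        then have "f x powr p \<le> g x powr p" using f0 p by (intro powr_mono2) auto
        then show ?thesis using True by (simp add: M_def m_def)
      next
        case False
        then have "g x powr p \<le> f x powr p" using f0 p by (intro powr_mono2) auto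
        then show ?thesis using False by (simp add: M_def m_def)
      qed
      then show "ennreal (M x powr p) = ennreal (m x powr p) + ennreal \<bar>f x powr p - g x powr p\<bar>"
        by (metis abs_ge_zero ennreal_plus powr_ge_zero)
    qed
    also have "\<dots> = (\<integral>\<^sup>+x. ennreal (m x powr p) \<partial>lebesgue) + D"
      unfolding D_def m_def by (rule nn_integral_add) measurable
    finally show ?thesis .
  qed
  moreover have "(\<integral>\<^sup>+x. ennreal (m x powr p) \<partial>lebesgue) \<noteq> \<infinity>"
  proof -
    have "(\<integral>\<^sup>+x. ennreal (m x powr p) \<partial>lebesgue) \<le> (\<integral>\<^sup>+x. ennreal (f x powr p) \<partial>lebesgue)"
      by (rule nn_integral_mono) (use f0 p in \<open>auto simp: m_def intro!: ennreal_leI powr_mono2\<close>)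
    with fin show ?thesis by (auto simp: top_unique)
  qed
  moreover have "(\<integral>\<^sup>+x. ennreal (S M x powr p) \<partial>lebesgue) = (\<integral>\<^sup>+x. ennreal (M x powr p) \<partial>lebesgue)"
    using rearr_int[OF S MV] p by simp
  moreover have "(\<integral>\<^sup>+x. ennreal (S m x powr p) \<partial>lebesgue) = (\<integral>\<^sup>+x. ennreal (m x powr p) \<partial>lebesgue)"
    using rearr_int[OF S mV] p by simp
  ultimately show ?thesis unfolding D_def[symmetric] using ennreal_add_left_cancel by metis
qed


lemma not_less_top_eq: "\<not> (y::ennreal) < \<infinity> \<Longrightarrow> y = \<infinity>"
  unfolding infinity_ennreal_def using less_top[of y] by blast

lemma lp_norm_Np: "lp_norm p f = (if Np p f = \<infinity> then \<infinity> else ennreal (enn2real (Np p f) powr (1/p)))"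
  by (simp add: lp_norm_def Np_def Let_def)

lemma Lp_V:
  fixes f :: "'a::euclidean_space \<Rightarrow> real"
  assumes p: "0 < p" and f: "f \<in> Lp_plus p"
  shows "f \<in> V_class" "Np p f \<noteq> \<infinity>" "(\<integral>\<^sup>+x. ennreal (f x powr p) \<partial>lebesgue) \<noteq> \<infinity>"
proof -
  have fm[measurable]: "f \<in> borel_measurable lebesgue" and f0: "\<And>x. 0 \<le> f x" and fl: "lp_norm p f < \<infinity>"
    using f unfolding Lp_plus_def by auto
  show Nf: "Np p f \<noteq> \<infinity>" using fl unfolding lp_norm_Np by (auto split: if_splits)
  have eqN: "Np p f = (\<integral>\<^sup>+x. ennreal (f x powr p) \<partial>lebesgue)" unfolding Np_def using f0 by simp
  then show "(\<integral>\<^sup>+x. ennreal (f x powr p) \<partial>lebesgue) \<noteq> \<infinity>" using Nf by simp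
  have "emeasure lebesgue {x. f x > t} < \<infinity>" if t: "0 < t" for t
  proof -
    have A: "{x. f x > t} \<in> sets lebesgue" by (rule set_leb[OF fm])
    have "ennreal (t powr p) * emeasure lebesgue {x. f x > t} = (\<integral>\<^sup>+x. ennreal (t powr p) * indicator {x. f x > t} x \<partial>lebesgue)"
      by (rule nn_integral_cmult_indicator[OF A, symmetric])
    also have "\<dots> \<le> Np p f" unfolding Np_def
    proof (rule nn_integral_mono)
      fix x
      show "ennreal (t powr p) * indicator {x. f x > t} x \<le> ennreal (\<bar>f x\<bar> powr p)"
      proof (cases "f x > t")
        case True
        then have "t powr p \<le> \<bar>f x\<bar> powr p" using t p by (intro powr_mono2) auto
        then show ?thesis using True by (simp add: ennreal_leI)
      qed simp
    qed
    finally have le: "ennreal (t powr p) * emeasure lebesgue {x. f x > t} \<le> Np p f" .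
    show ?thesis
    proof (rule ccontr)
      assume "\<not> ?thesis"
      then have "emeasure lebesgue {x. f x > t} = \<infinity>" by (rule not_less_top_eq)
      moreover have "0 < t powr p" using t by simp
      ultimately have "ennreal (t powr p) * emeasure lebesgue {x. f x > t} = \<infinity>"
        by (simp add: ennreal_mult_top)
      with le Nf show False by (simp add: top_unique)
    qed
  qed
  then show "f \<in> V_class" unfolding V_class_def using f0 by auto
qed

definition evz :: "(nat \<Rightarrow> ennreal) \<Rightarrow> bool" where
  "evz X \<longleftrightarrow> (\<forall>e>0. eventually (\<lambda>k. X k < ennreal e) sequentially)"

lemma tendsto0_evz: "(X \<longlonglongrightarrow> (0::ennreal)) \<longleftrightarrow> evz X"
proof
  assume "X \<longlonglongrightarrow> 0"
  then show "evz X" unfolding evz_def order_tendsto_iff by simp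
next
  assume a: "evz X"
  show "X \<longlonglongrightarrow> 0" unfolding order_tendsto_iff
  proof (intro conjI allI impI)
    fix b :: ennreal assume "0 < b"
    then obtain e where e: "0 < e" "ennreal e \<le> b"
      by (metis ennreal_enn2real_if ennreal_less_zero_iff enn2real_positive_iff less_top order_refl zero_less_one top_greatest)
    have "eventually (\<lambda>k. X k < ennreal e) sequentially" using a[unfolded evz_def] e(1) by blast
    then show "\<forall>\<^sub>F k in sequentially. X k < b"
      by (rule eventually_mono) (meson e(2) less_le_trans)
  qed simp
qed

lemma lp_lt_iff:
  assumes p: "0 < p" and e: "0 < e"
  shows "lp_norm p h < ennreal e \<longleftrightarrow> Np p h < ennreal (e powr p)"
proof (cases "Np p h = \<infinity>")
  case True then show ?thesis by (simp add: lp_norm_Np)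
next
  case False
  define r where "r = enn2real (Np p h)"
  have r0: "0 \<le> r" and Nr: "Np p h = ennreal r" using False by (auto simp: r_def ennreal_enn2real_if)
  have "lp_norm p h = ennreal (r powr (1/p))" using False by (simp add: lp_norm_Np r_def)
  moreover have "r powr (1/p) < e \<longleftrightarrow> r < e powr p"
  proof (cases "r = 0")
    case True then show ?thesis using e p by simp
  next
    case False then show ?thesis using level_powr[of e r p] r0 e p by auto
  qed
  ultimately show ?thesis using Nr r0 e by (simp add: ennreal_less_iff)
qed

lemma lp_tendsto_iff:
  assumes p: "0 < p"
  shows "((\<lambda>k. lp_norm p (h k)) \<longlonglongrightarrow> 0) \<longleftrightarrow> evz (\<lambda>k. Np p (h k))"
proof -
  have "((\<lambda>k. lp_norm p (h k)) \<longlonglongrightarrow> 0) \<longleftrightarrow> (\<forall>e>0. eventually (\<lambda>k. Np p (h k) < ennreal (e powr p)) sequentially)"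
    unfolding tendsto0_evz evz_def
  proof (intro iffI allI impI)
    fix e :: real assume A: "\<forall>e>0. eventually (\<lambda>k. lp_norm p (h k) < ennreal e) sequentially" and e: "0 < e"
    show "eventually (\<lambda>k. Np p (h k) < ennreal (e powr p)) sequentially"
      using A[rule_format, OF e] by (rule eventually_mono) (use lp_lt_iff[OF p e] in blast)
  next
    fix e :: real assume A: "\<forall>e>0. eventually (\<lambda>k. Np p (h k) < ennreal (e powr p)) sequentially" and e: "0 < e"
    show "eventually (\<lambda>k. lp_norm p (h k) < ennreal e) sequentially"
      using A[rule_format, OF e] by (rule eventually_mono) (use lp_lt_iff[OF p e] in blast)
  qed
  also have "\<dots> \<longleftrightarrow> evz (\<lambda>k. Np p (h k))"
    unfolding evz_def
  proof (intro iffI allI impI)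
    fix e :: real assume A: "\<forall>e>0. eventually (\<lambda>k. Np p (h k) < ennreal (e powr p)) sequentially" and e: "0 < e"
    have "(e powr (1/p)) powr p = e" using e p by (simp add: powr_powr)
    then show "eventually (\<lambda>k. Np p (h k) < ennreal e) sequentially"
      using A[rule_format, of "e powr (1/p)"] e by simp
  next
    fix e :: real assume A: "\<forall>e>0. eventually (\<lambda>k. Np p (h k) < ennreal e) sequentially" and e: "0 < e"
    show "eventually (\<lambda>k. Np p (h k) < ennreal (e powr p)) sequentially"
      using A[rule_format, of "e powr p"] e by simp
  qed
  finally show ?thesis .
qed

lemma tri3:
  fixes a b c :: "'a::euclidean_space \<Rightarrow> real"
  assumes p: "0 < p" and [measurable]: "a \<in> borel_measurable lebesgue" "b \<in> borel_measurable lebesgue" "c \<in> borel_measurable lebesgue"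
  shows "Np p (\<lambda>x. a x + b x + c x) \<le> ennreal (3 powr p) * (Np p a + Np p b + Np p c)"
proof -
  have pw: "\<bar>a x + b x + c x\<bar> powr p \<le> 3 powr p * (\<bar>a x\<bar> powr p + \<bar>b x\<bar> powr p + \<bar>c x\<bar> powr p)" for x
  proof -
    define mx where "mx = max \<bar>a x\<bar> (max \<bar>b x\<bar> \<bar>c x\<bar>)"
    have "\<bar>a x\<bar> \<le> mx" "\<bar>b x\<bar> \<le> mx" "\<bar>c x\<bar> \<le> mx" unfolding mx_def by auto
    then have "\<bar>a x + b x + c x\<bar> \<le> 3 * mx"
      using abs_triangle_ineq[of "a x + b x" "c x"] abs_triangle_ineq[of "a x" "b x"] by linarith
    then have "\<bar>a x + b x + c x\<bar> powr p \<le> (3 * mx) powr p" using p by (intro powr_mono2) auto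
    also have "\<dots> = 3 powr p * mx powr p" unfolding mx_def by (simp add: powr_mult)
    also have "mx powr p \<le> \<bar>a x\<bar> powr p + \<bar>b x\<bar> powr p + \<bar>c x\<bar> powr p"
    proof -
      have "mx = \<bar>a x\<bar> \<or> mx = \<bar>b x\<bar> \<or> mx = \<bar>c x\<bar>" unfolding mx_def max_def by auto
      moreover have "0 \<le> \<bar>a x\<bar> powr p" "0 \<le> \<bar>b x\<bar> powr p" "0 \<le> \<bar>c x\<bar> powr p" by auto
      ultimately show ?thesis by auto
    qed
    finally show ?thesis by simp
  qed
  have "Np p (\<lambda>x. a x + b x + c x) \<le> (\<integral>\<^sup>+x. ennreal (3 powr p) * (ennreal (\<bar>a x\<bar> powr p) + ennreal (\<bar>b x\<bar> powr p) + ennreal (\<bar>c x\<bar> powr p)) \<partial>lebesgue)"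
    unfolding Np_def
  proof (rule nn_integral_mono)
    fix x
    have "ennreal (\<bar>a x + b x + c x\<bar> powr p) \<le> ennreal (3 powr p * (\<bar>a x\<bar> powr p + \<bar>b x\<bar> powr p + \<bar>c x\<bar> powr p))"
      using pw by (rule ennreal_leI)
    also have "\<dots> = ennreal (3 powr p) * (ennreal (\<bar>a x\<bar> powr p) + ennreal (\<bar>b x\<bar> powr p) + ennreal (\<bar>c x\<bar> powr p))"
    proof -
      have q1: "ennreal (3 powr p * (\<bar>a x\<bar> powr p + \<bar>b x\<bar> powr p + \<bar>c x\<bar> powr p)) = ennreal (3 powr p) * ennreal (\<bar>a x\<bar> powr p + \<bar>b x\<bar> powr p + \<bar>c x\<bar> powr p)"
        by (rule ennreal_mult) auto
      have q2: "ennreal (\<bar>a x\<bar> powr p + \<bar>b x\<bar> powr p + \<bar>c x\<bar> powr p) = ennreal (\<bar>a x\<bar> powr p + \<bar>b x\<bar> powr p) + ennreal (\<bar>c x\<bar> powr p)"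
        by (rule ennreal_plus) auto
      have q3: "ennreal (\<bar>a x\<bar> powr p + \<bar>b x\<bar> powr p) = ennreal (\<bar>a x\<bar> powr p) + ennreal (\<bar>b x\<bar> powr p)"
        by (rule ennreal_plus) auto
      show ?thesis by (simp only: q1 q2 q3)
    qed
    finally show "ennreal (\<bar>a x + b x + c x\<bar> powr p) \<le> \<dots>" .
  qed
  also have "\<dots> = ennreal (3 powr p) * (Np p a + Np p b + Np p c)"
  proof -
    have m3: "(\<lambda>x. ennreal (\<bar>a x\<bar> powr p) + ennreal (\<bar>b x\<bar> powr p) + ennreal (\<bar>c x\<bar> powr p)) \<in> borel_measurable lebesgue"
      by measurable
    have e1: "(\<integral>\<^sup>+x. ennreal (3 powr p) * (ennreal (\<bar>a x\<bar> powr p) + ennreal (\<bar>b x\<bar> powr p) + ennreal (\<bar>c x\<bar> powr p)) \<partial>lebesgue)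
       = ennreal (3 powr p) * (\<integral>\<^sup>+x. (ennreal (\<bar>a x\<bar> powr p) + ennreal (\<bar>b x\<bar> powr p) + ennreal (\<bar>c x\<bar> powr p)) \<partial>lebesgue)"
      by (rule nn_integral_cmult[OF m3])
    have e2: "(\<integral>\<^sup>+x. (ennreal (\<bar>a x\<bar> powr p) + ennreal (\<bar>b x\<bar> powr p) + ennreal (\<bar>c x\<bar> powr p)) \<partial>lebesgue)
       = (\<integral>\<^sup>+x. (ennreal (\<bar>a x\<bar> powr p) + ennreal (\<bar>b x\<bar> powr p)) \<partial>lebesgue) + (\<integral>\<^sup>+x. ennreal (\<bar>c x\<bar> powr p) \<partial>lebesgue)"
      by (rule nn_integral_add) measurable
    have e3: "(\<integral>\<^sup>+x. (ennreal (\<bar>a x\<bar> powr p) + ennreal (\<bar>b x\<bar> powr p)) \<partial>lebesgue)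
       = (\<integral>\<^sup>+x. ennreal (\<bar>a x\<bar> powr p) \<partial>lebesgue) + (\<integral>\<^sup>+x. ennreal (\<bar>b x\<bar> powr p) \<partial>lebesgue)"
      by (rule nn_integral_add) measurable
    show ?thesis unfolding Np_def by (simp only: e1 e2 e3)
  qed
  finally show ?thesis .
qed

lemma pw_eps:
  fixes a b d p :: real
  assumes a: "0 \<le> a" and b: "0 \<le> b" and d: "0 < d" "d \<le> 1" and p: "1 \<le> p"
  shows "\<bar>a powr p - b powr p\<bar> \<le> ((1+d) powr p - (1-d) powr p) * a powr p + (1 + 1/d) powr p * \<bar>b - a\<bar> powr p"
proof -
  have c0: "(1-d) powr p \<le> (1+d) powr p" using d p by (intro powr_mono2) auto
  have t1: "0 \<le> ((1+d) powr p - (1-d) powr p) * a powr p" using c0 by simp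
  have t2: "0 \<le> (1 + 1/d) powr p * \<bar>b - a\<bar> powr p" by simp
  show ?thesis
  proof (cases "\<bar>b - a\<bar> \<le> d * a")
    case True
    then have lo: "(1-d) * a \<le> b" and hi: "b \<le> (1+d) * a" by (auto simp: algebra_simps abs_le_iff)
    have "b powr p \<le> ((1+d) * a) powr p" using hi b p by (intro powr_mono2) auto
    also have "\<dots> = (1+d) powr p * a powr p" using a d by (simp add: powr_mult)
    finally have bhi: "b powr p \<le> (1+d) powr p * a powr p" .
    have "((1-d) * a) powr p \<le> b powr p" using lo a d p by (intro powr_mono2) auto
    moreover have "((1-d) * a) powr p = (1-d) powr p * a powr p" using a d by (simp add: powr_mult)
    ultimately have blo: "(1-d) powr p * a powr p \<le> b powr p" by simp
    have g1: "1 \<le> (1+d) powr p" using d p by (intro ge_one_powr_ge_zero) auto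
    have l1: "(1-d) powr p \<le> 1" using powr_le_self[of "1-d" p] d p by auto
    have ap0: "0 \<le> a powr p" by simp
    have "a powr p \<le> (1+d) powr p * a powr p" using g1 ap0 by (metis mult_left_mono mult.commute mult_1_left)
    moreover have "(1-d) powr p * a powr p \<le> a powr p" using l1 ap0 by (metis mult_right_mono mult_1_left)
    ultimately have "\<bar>a powr p - b powr p\<bar> \<le> ((1+d) powr p - (1-d) powr p) * a powr p"
      using bhi blo by (simp add: abs_le_iff algebra_simps)
    then show ?thesis using t2 by linarith
  next
    case False
    define u where "u = \<bar>b - a\<bar>"
    have u0: "0 \<le> u" by (simp add: u_def)
    have "a * d < u" using False by (simp add: u_def mult.commute)
    then have au: "a \<le> u / d" using d by (simp add: field_simps)
    have "u / d = (1/d) * u" by simp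
    have eqd: "(1 + 1/d) * u = u / d + u" by (simp add: algebra_simps)
    have au2: "a \<le> (1 + 1/d) * u" using au u0 unfolding eqd by linarith
    have bu2: "b \<le> (1 + 1/d) * u"
    proof -
      have "b \<le> a + u" unfolding u_def by linarith
      also have "\<dots> \<le> u / d + u" using au by simp
      finally show ?thesis unfolding eqd .
    qed
    have "a powr p \<le> ((1 + 1/d) * u) powr p" using au2 a p by (intro powr_mono2) auto
    moreover have "b powr p \<le> ((1 + 1/d) * u) powr p" using bu2 b p by (intro powr_mono2) auto
    moreover have "((1 + 1/d) * u) powr p = (1 + 1/d) powr p * u powr p" using u0 d by (simp add: powr_mult)
    ultimately have "\<bar>a powr p - b powr p\<bar> \<le> (1 + 1/d) powr p * \<bar>b - a\<bar> powr p"
      unfolding u_def by (simp add: abs_le_iff) (smt (verit) powr_ge_zero)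
    then show ?thesis using t1 by linarith
  qed
qed

lemma small_d:
  fixes p \<eta> :: real assumes p: "1 \<le> p" and e: "0 < \<eta>"
  shows "\<exists>d. 0 < d \<and> d \<le> 1 \<and> (1+d) powr p - (1-d) powr p < \<eta>"
proof -
  have "((\<lambda>d. (1+d) powr p - (1-d) powr p) \<longlongrightarrow> (1+0) powr p - (1-0) powr p) (at_right (0::real))"
    by (intro tendsto_intros) auto
  then have "((\<lambda>d. (1+d) powr p - (1-d) powr p) \<longlongrightarrow> 0) (at_right (0::real))" by simp
  then have ev1: "eventually (\<lambda>d. (1+d) powr p - (1-d) powr p < \<eta>) (at_right (0::real))"
    using e by (auto dest: order_tendstoD)
  have ev2: "eventually (\<lambda>d. 0 < d \<and> d \<le> (1::real)) (at_right 0)"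
    unfolding eventually_at_right_field by (intro exI[of _ 1]) auto
  have "eventually (\<lambda>d. 0 < d \<and> d \<le> 1 \<and> (1+d) powr p - (1-d) powr p < \<eta>) (at_right (0::real))"
    using ev1 ev2 by eventually_elim auto
  then show ?thesis using eventually_happens[of _ "at_right (0::real)"] by (auto simp: trivial_limit_at_right_real)
qed

lemma Econv:
  fixes f :: "'a::euclidean_space \<Rightarrow> real"
  assumes p: "1 \<le> p" and f: "f \<in> Lp_plus p" and g: "\<And>j. g j \<in> Lp_plus p"
    and conv: "evz (\<lambda>j. Np p (\<lambda>x. g j x - f x))"
  shows "evz (\<lambda>j. \<integral>\<^sup>+x. ennreal \<bar>f x powr p - g j x powr p\<bar> \<partial>lebesgue)"
  unfolding evz_def
proof (intro allI impI)
  fix e :: real assume e: "0 < e"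
  have p0: "0 < p" using p by simp
  have fm[measurable]: "f \<in> borel_measurable lebesgue" and f0: "\<And>x. 0 \<le> f x"
    using f unfolding Lp_plus_def by auto
  have gm[measurable]: "\<And>j. g j \<in> borel_measurable lebesgue" and g0: "\<And>j x. 0 \<le> g j x"
    using g unfolding Lp_plus_def by auto
  define IF where "IF = (\<integral>\<^sup>+x. ennreal (f x powr p) \<partial>lebesgue)"
  define A where "A = enn2real IF"
  have IFA: "IF = ennreal A" and A0: "0 \<le> A"
    using Lp_V(3)[OF p0 f] unfolding A_def IF_def by (auto simp: ennreal_enn2real_if)
  obtain d where d: "0 < d" "d \<le> 1" and cd: "(1+d) powr p - (1-d) powr p < e / (4 * (A + 1))"
    using small_d[OF p, of "e / (4 * (A + 1))"] e A0 by auto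
  define c where "c = (1+d) powr p - (1-d) powr p"
  define C where "C = (1 + 1/d) powr p"
  have c0: "0 \<le> c" unfolding c_def using d p by (simp add: powr_mono2)
  have "0 < 1 + 1/d" using d by (simp add: add_pos_pos)
  then have C0: "0 < C" unfolding C_def by simp
  have cA: "c * A \<le> e / 4"
  proof -
    have "c * A \<le> c * (A + 1)" using c0 by (simp add: mult_left_mono)
    also have "\<dots> \<le> e / 4" using cd A0 unfolding c_def[symmetric] by (simp add: field_simps)
    finally show ?thesis .
  qed
  have ev: "eventually (\<lambda>j. Np p (\<lambda>x. g j x - f x) < ennreal (e / (4 * C))) sequentially"
    using conv e C0 unfolding evz_def by simp
  then show "eventually (\<lambda>j. (\<integral>\<^sup>+x. ennreal \<bar>f x powr p - g j x powr p\<bar> \<partial>lebesgue) < ennreal e) sequentially"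
  proof (rule eventually_mono)
    fix j assume lt: "Np p (\<lambda>x. g j x - f x) < ennreal (e / (4 * C))"
    have m1: "(\<lambda>x. ennreal c * ennreal (f x powr p)) \<in> borel_measurable lebesgue" by measurable
    have m2: "(\<lambda>x. ennreal C * ennreal (\<bar>g j x - f x\<bar> powr p)) \<in> borel_measurable lebesgue" by measurable
    have m3: "(\<lambda>x. ennreal (f x powr p)) \<in> borel_measurable lebesgue" by measurable
    have m4: "(\<lambda>x. ennreal (\<bar>g j x - f x\<bar> powr p)) \<in> borel_measurable lebesgue" by measurable
    have "(\<integral>\<^sup>+x. ennreal \<bar>f x powr p - g j x powr p\<bar> \<partial>lebesgue)
        \<le> (\<integral>\<^sup>+x. ennreal c * ennreal (f x powr p) + ennreal C * ennreal (\<bar>g j x - f x\<bar> powr p) \<partial>lebesgue)"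
    proof (rule nn_integral_mono)
      fix x
      have "\<bar>f x powr p - g j x powr p\<bar> \<le> c * f x powr p + C * \<bar>g j x - f x\<bar> powr p"
        unfolding c_def C_def by (rule pw_eps[OF f0 g0 d p])
      then have "ennreal \<bar>f x powr p - g j x powr p\<bar> \<le> ennreal (c * f x powr p + C * \<bar>g j x - f x\<bar> powr p)"
        by (rule ennreal_leI)
      also have "\<dots> = ennreal c * ennreal (f x powr p) + ennreal C * ennreal (\<bar>g j x - f x\<bar> powr p)"
      proof -
        have q1: "ennreal (c * f x powr p + C * \<bar>g j x - f x\<bar> powr p) = ennreal (c * f x powr p) + ennreal (C * \<bar>g j x - f x\<bar> powr p)"
          by (rule ennreal_plus) (use c0 C0 in auto)
        have q2: "ennreal (c * f x powr p) = ennreal c * ennreal (f x powr p)"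
          by (rule ennreal_mult) (use c0 in auto)
        have q3: "ennreal (C * \<bar>g j x - f x\<bar> powr p) = ennreal C * ennreal (\<bar>g j x - f x\<bar> powr p)"
          by (rule ennreal_mult) (use C0 in auto)
        show ?thesis by (simp only: q1 q2 q3)
      qed
      finally show "ennreal \<bar>f x powr p - g j x powr p\<bar> \<le> \<dots>" .
    qed
    also have "\<dots> = (\<integral>\<^sup>+x. ennreal c * ennreal (f x powr p) \<partial>lebesgue) + (\<integral>\<^sup>+x. ennreal C * ennreal (\<bar>g j x - f x\<bar> powr p) \<partial>lebesgue)"
      by (rule nn_integral_add[OF m1 m2])
    also have "\<dots> = ennreal c * IF + ennreal C * Np p (\<lambda>x. g j x - f x)"
      unfolding IF_def Np_def by (simp only: nn_integral_cmult[OF m3] nn_integral_cmult[OF m4])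
    also have "\<dots> \<le> ennreal (e/4) + ennreal (e/4)"
    proof (rule add_mono)
      show "ennreal c * IF \<le> ennreal (e/4)" 
      proof -
        have "ennreal c * ennreal A = ennreal (c * A)" using c0 A0 by (intro ennreal_mult[symmetric]) auto
        then show ?thesis unfolding IFA using ennreal_leI[OF cA] by simp
      qed
      have "ennreal C * Np p (\<lambda>x. g j x - f x) \<le> ennreal C * ennreal (e / (4 * C))"
        using lt by (intro mult_left_mono) auto
      also have "\<dots> = ennreal (C * (e / (4 * C)))" using C0 e by (intro ennreal_mult[symmetric]) auto
      also have "\<dots> = ennreal (e / 4)" using C0 by simp
      finally show "ennreal C * Np p (\<lambda>x. g j x - f x) \<le> ennreal (e/4)" .
    qed
    also have "\<dots> = ennreal (e/4 + e/4)" using e by (intro ennreal_plus[symmetric]) auto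
    also have "\<dots> = ennreal (e/2)" by simp
    also have "\<dots> < ennreal e" using e by (simp add: ennreal_less_iff)
    finally show "(\<integral>\<^sup>+x. ennreal \<bar>f x powr p - g j x powr p\<bar> \<partial>lebesgue) < ennreal e" .
  qed
qed


lemma rearr_comp:
  assumes A: "rearrangement A" and B: "rearrangement B"
  shows "rearrangement (A \<circ> B)"
  unfolding rearrangement_def
proof (intro conjI ballI allI impI)
  fix f :: "'a \<Rightarrow> real" assume f: "f \<in> V_class"
  have Bf: "B f \<in> V_class" using B f unfolding rearrangement_def by auto
  show "(A \<circ> B) f \<in> V_class" using A Bf unfolding rearrangement_def by auto
  fix t :: real
  have "emeasure lebesgue {x. A (B f) x > t} = emeasure lebesgue {x. B f x > t}"
    using A Bf unfolding rearrangement_def by auto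
  also have "\<dots> = emeasure lebesgue {x. f x > t}"
    using B f unfolding rearrangement_def by auto
  finally show "emeasure lebesgue {x. (A \<circ> B) f x > t} = emeasure lebesgue {x. f x > t}" by simp
next
  fix f g :: "'a \<Rightarrow> real" assume f: "f \<in> V_class" and g: "g \<in> V_class"
    and le: "AE x in lebesgue. f x \<le> g x"
  have Bf: "B f \<in> V_class" and Bg: "B g \<in> V_class" using B f g unfolding rearrangement_def by auto
  have "AE x in lebesgue. B f x \<le> B g x" using B f g le unfolding rearrangement_def by auto
  then have "AE x in lebesgue. A (B f) x \<le> A (B g) x" using A Bf Bg unfolding rearrangement_def by auto
  then show "AE x in lebesgue. (A \<circ> B) f x \<le> (A \<circ> B) g x" by simp
qed

lemma rearr_comp_upto:
  assumes "\<And>k. rearrangement (S k)"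
  shows "rearrangement (comp_upto S k)"
proof (induction k)
  case 0 then show ?case using assms by simp
next
  case (Suc k) then show ?case unfolding comp_upto.simps(2) by (rule rearr_comp[OF assms])
qed

lemma boundB:
  fixes f g :: "'a::euclidean_space \<Rightarrow> real"
  assumes p: "1 \<le> p" and R: "rearrangement R" and T: "rearrangement T"
    and f: "f \<in> Lp_plus p" and g: "g \<in> Lp_plus p"
  shows "Np p (\<lambda>x. R f x - T f x) \<le> ennreal (3 powr p) *
     ((\<integral>\<^sup>+x. ennreal \<bar>f x powr p - g x powr p\<bar> \<partial>lebesgue) + Np p (\<lambda>x. R g x - T g x)
       + (\<integral>\<^sup>+x. ennreal \<bar>f x powr p - g x powr p\<bar> \<partial>lebesgue))"
proof -
  have p0: "0 < p" using p by simp
  have fV: "f \<in> V_class" and gV: "g \<in> V_class" using Lp_V(1)[OF p0] f g by auto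
  note [measurable] = V_facts(1)[OF rearr_V[OF R fV]] V_facts(1)[OF rearr_V[OF R gV]]
    V_facts(1)[OF rearr_V[OF T fV]] V_facts(1)[OF rearr_V[OF T gV]]
  have m1: "(\<lambda>x. R f x - R g x) \<in> borel_measurable lebesgue" by measurable
  have m2: "(\<lambda>x. R g x - T g x) \<in> borel_measurable lebesgue" by measurable
  have m3: "(\<lambda>x. T g x - T f x) \<in> borel_measurable lebesgue" by measurable
  have k1: "Np p (\<lambda>x. R f x - R g x) \<le> (\<integral>\<^sup>+x. ennreal \<bar>f x powr p - g x powr p\<bar> \<partial>lebesgue)"
    by (rule key[OF p R fV gV Lp_V(3)[OF p0 f]])
  have k2: "Np p (\<lambda>x. T g x - T f x) \<le> (\<integral>\<^sup>+x. ennreal \<bar>f x powr p - g x powr p\<bar> \<partial>lebesgue)"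
    using key[OF p T gV fV Lp_V(3)[OF p0 g]] by (simp add: abs_minus_commute)
  have "(\<lambda>x. R f x - T f x) = (\<lambda>x. (R f x - R g x) + (R g x - T g x) + (T g x - T f x))" by auto
  then have "Np p (\<lambda>x. R f x - T f x) = Np p (\<lambda>x. (R f x - R g x) + (R g x - T g x) + (T g x - T f x))" by simp
  also have "\<dots> \<le> ennreal (3 powr p) * (Np p (\<lambda>x. R f x - R g x) + Np p (\<lambda>x. R g x - T g x) + Np p (\<lambda>x. T g x - T f x))"
    by (rule tri3[OF p0 m1 m2 m3])
  also have "\<dots> \<le> ennreal (3 powr p) *
     ((\<integral>\<^sup>+x. ennreal \<bar>f x powr p - g x powr p\<bar> \<partial>lebesgue) + Np p (\<lambda>x. R g x - T g x)
       + (\<integral>\<^sup>+x. ennreal \<bar>f x powr p - g x powr p\<bar> \<partial>lebesgue))"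
    by (intro mult_left_mono add_mono k1 k2 order_refl) simp
  finally show ?thesis .
qed

lemma fin3:
  fixes a b c :: ennreal and K d :: real
  assumes "a < ennreal d" "b < ennreal d" "c < ennreal d" "0 \<le> d" "0 \<le> K"
  shows "ennreal K * (a + b + c) \<le> ennreal (K * (3 * d))"
proof -
  have "a + b + c \<le> ennreal d + ennreal d + ennreal d"
    using assms by (intro add_mono) auto
  also have "ennreal d + ennreal d + ennreal d = ennreal (3 * d)"
  proof -
    have "ennreal d + ennreal d = ennreal (d + d)" using assms by (intro ennreal_plus[symmetric]) auto
    moreover have "ennreal (d + d) + ennreal d = ennreal (d + d + d)" using assms by (intro ennreal_plus[symmetric]) auto
    ultimately show ?thesis by simp
  qed
  finally have "ennreal K * (a + b + c) \<le> ennreal K * ennreal (3 * d)" by (rule mult_left_mono) simp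
  also have "\<dots> = ennreal (K * (3 * d))" using assms by (intro ennreal_mult[symmetric]) auto
  finally show ?thesis .
qed

lemma approxG:
  fixes f :: "'a::euclidean_space \<Rightarrow> real"
  assumes p: "1 \<le> p" and T: "rearrangement T" and R: "\<And>k. rearrangement (R k)"
    and f: "f \<in> Lp_plus p" and g: "\<And>j. g j \<in> Lp_plus p"
    and conv: "evz (\<lambda>j. Np p (\<lambda>x. g j x - f x))"
    and app: "\<And>j. evz (\<lambda>k. Np p (\<lambda>x. R k (g j) x - T (g j) x))"
  shows "evz (\<lambda>k. Np p (\<lambda>x. R k f x - T f x))"
  unfolding evz_def
proof (intro allI impI)
  fix e :: real assume e: "0 < e"
  define K where "K = 3 powr p"
  have K0: "0 < K" unfolding K_def by simp
  define d where "d = e / (4 * K)"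
  have d0: "0 < d" unfolding d_def using e K0 by simp
  have Kd: "K * (3 * d) < e" unfolding d_def using e K0 by (simp add: field_simps)
  have "eventually (\<lambda>j. (\<integral>\<^sup>+x. ennreal \<bar>f x powr p - g j x powr p\<bar> \<partial>lebesgue) < ennreal d) sequentially"
    using Econv[OF p f g conv] d0 unfolding evz_def by blast
  then obtain N where "\<forall>n\<ge>N. (\<integral>\<^sup>+x. ennreal \<bar>f x powr p - g n x powr p\<bar> \<partial>lebesgue) < ennreal d"
    unfolding eventually_sequentially by blast
  then have Ej: "(\<integral>\<^sup>+x. ennreal \<bar>f x powr p - g N x powr p\<bar> \<partial>lebesgue) < ennreal d" by blast
  define j where "j = N"
  note Ej = Ej[folded j_def]
  have "eventually (\<lambda>k. Np p (\<lambda>x. R k (g j) x - T (g j) x) < ennreal d) sequentially"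
    using app[of j] d0 unfolding evz_def by blast
  then show "eventually (\<lambda>k. Np p (\<lambda>x. R k f x - T f x) < ennreal e) sequentially"
  proof (rule eventually_mono)
    fix k assume lt: "Np p (\<lambda>x. R k (g j) x - T (g j) x) < ennreal d"
    have "Np p (\<lambda>x. R k f x - T f x) \<le> ennreal K *
     ((\<integral>\<^sup>+x. ennreal \<bar>f x powr p - g j x powr p\<bar> \<partial>lebesgue) + Np p (\<lambda>x. R k (g j) x - T (g j) x)
       + (\<integral>\<^sup>+x. ennreal \<bar>f x powr p - g j x powr p\<bar> \<partial>lebesgue))"
      unfolding K_def by (rule boundB[OF p R T f g])
    also have "\<dots> \<le> ennreal (K * (3 * d))" by (rule fin3[OF Ej lt Ej]) (use d0 K0 in auto)
    also have "\<dots> < ennreal e" using Kd e by (intro ennreal_lessI) auto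
    finally show "Np p (\<lambda>x. R k f x - T f x) < ennreal e" .
  qed
qed


lemma evz_obtain:
  assumes "evz X" "0 < e"
  shows "\<exists>N. X N < ennreal e"
proof -
  have "eventually (\<lambda>k. X k < ennreal e) sequentially" using assms unfolding evz_def by blast
  then obtain N where "\<forall>n\<ge>N. X n < ennreal e" unfolding eventually_sequentially by blast
  then show ?thesis by blast
qed

lemma weakW:
  fixes f :: "'a::euclidean_space \<Rightarrow> real"
  assumes p: "1 \<le> p" and T: "rearrangement T" and W: "\<forall>S\<in>W. rearrangement S"
    and f: "f \<in> Lp_plus p" and g: "\<And>j. g j \<in> Lp_plus p"
    and conv: "evz (\<lambda>j. Np p (\<lambda>x. g j x - f x))"
    and app: "\<And>j. \<exists>Tk. (\<forall>k. Tk k \<in> W) \<and> evz (\<lambda>k. Np p (\<lambda>x. Tk k (g j) x - T (g j) x))"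
  shows "\<exists>Tk. (\<forall>k. Tk k \<in> W) \<and> evz (\<lambda>k. Np p (\<lambda>x. Tk k f x - T f x))"
proof -
  have "\<forall>j. \<exists>Tk. (\<forall>k. Tk k \<in> W) \<and> evz (\<lambda>k. Np p (\<lambda>x. Tk k (g j) x - T (g j) x))" using app by blast
  then have "\<exists>U. \<forall>j. (\<forall>k. U j k \<in> W) \<and> evz (\<lambda>k. Np p (\<lambda>x. U j k (g j) x - T (g j) x))"
    by (rule choice)
  then obtain U where U0: "\<forall>j. (\<forall>k. U j k \<in> W) \<and> evz (\<lambda>k. Np p (\<lambda>x. U j k (g j) x - T (g j) x))"
    by (elim exE)
  have U: "(\<forall>k. U j k \<in> W) \<and> evz (\<lambda>k. Np p (\<lambda>x. U j k (g j) x - T (g j) x))" for j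
    using U0 by (rule spec)
  define K where "K = 3 powr p"
  have K0: "0 < K" unfolding K_def by simp
  define dd where "dd = (\<lambda>m::nat. 1 / (real m + 1))"
  have dd0: "0 < dd m" for m unfolding dd_def by simp
  have pick: "\<exists>jk. (\<integral>\<^sup>+x. ennreal \<bar>f x powr p - g (fst jk) x powr p\<bar> \<partial>lebesgue) < ennreal (dd m)
     \<and> Np p (\<lambda>x. U (fst jk) (snd jk) (g (fst jk)) x - T (g (fst jk)) x) < ennreal (dd m)" for m
  proof -
    obtain j where j: "(\<integral>\<^sup>+x. ennreal \<bar>f x powr p - g j x powr p\<bar> \<partial>lebesgue) < ennreal (dd m)"
      using evz_obtain[OF Econv[OF p f g conv] dd0[of m]] by blast
    obtain k where k: "Np p (\<lambda>x. U j k (g j) x - T (g j) x) < ennreal (dd m)"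
      using evz_obtain[OF conjunct2[OF U[of j]] dd0[of m]] by blast
    show ?thesis using j k by (intro exI[of _ "(j, k)"]) simp
  qed
  then have "\<forall>m. \<exists>jk. (\<integral>\<^sup>+x. ennreal \<bar>f x powr p - g (fst jk) x powr p\<bar> \<partial>lebesgue) < ennreal (dd m)
     \<and> Np p (\<lambda>x. U (fst jk) (snd jk) (g (fst jk)) x - T (g (fst jk)) x) < ennreal (dd m)" by (rule allI)
  then have "\<exists>JK. \<forall>m. (\<integral>\<^sup>+x. ennreal \<bar>f x powr p - g (fst (JK m)) x powr p\<bar> \<partial>lebesgue) < ennreal (dd m)
     \<and> Np p (\<lambda>x. U (fst (JK m)) (snd (JK m)) (g (fst (JK m))) x - T (g (fst (JK m))) x) < ennreal (dd m)"
    by (rule choice)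
  then obtain JK where JK0: "\<forall>m. (\<integral>\<^sup>+x. ennreal \<bar>f x powr p - g (fst (JK m)) x powr p\<bar> \<partial>lebesgue) < ennreal (dd m)
     \<and> Np p (\<lambda>x. U (fst (JK m)) (snd (JK m)) (g (fst (JK m))) x - T (g (fst (JK m))) x) < ennreal (dd m)"
    by (elim exE)
  have JK: "(\<integral>\<^sup>+x. ennreal \<bar>f x powr p - g (fst (JK m)) x powr p\<bar> \<partial>lebesgue) < ennreal (dd m)
     \<and> Np p (\<lambda>x. U (fst (JK m)) (snd (JK m)) (g (fst (JK m))) x - T (g (fst (JK m))) x) < ennreal (dd m)" for m
    using JK0 by (rule spec)
  define Rk where "Rk = (\<lambda>m. U (fst (JK m)) (snd (JK m)))"
  have RW: "\<forall>m. Rk m \<in> W" unfolding Rk_def using U by blast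
  have bnd: "Np p (\<lambda>x. Rk m f x - T f x) \<le> ennreal (K * (3 * dd m))" for m
  proof -
    have Rr: "rearrangement (Rk m)" using RW W by blast
    have "Np p (\<lambda>x. Rk m f x - T f x) \<le> ennreal K *
     ((\<integral>\<^sup>+x. ennreal \<bar>f x powr p - g (fst (JK m)) x powr p\<bar> \<partial>lebesgue) + Np p (\<lambda>x. Rk m (g (fst (JK m))) x - T (g (fst (JK m))) x)
       + (\<integral>\<^sup>+x. ennreal \<bar>f x powr p - g (fst (JK m)) x powr p\<bar> \<partial>lebesgue))"
      unfolding K_def by (rule boundB[OF p Rr T f g])
    also have "\<dots> \<le> ennreal (K * (3 * dd m))"
      using JK[of m] unfolding Rk_def by (intro fin3) (use dd0[of m] K0 in auto)
    finally show ?thesis .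
  qed
  have "evz (\<lambda>m. Np p (\<lambda>x. Rk m f x - T f x))"
    unfolding evz_def
  proof (intro allI impI)
    fix e :: real assume e: "0 < e"
    obtain N :: nat where N: "K * 3 / e < real N" using reals_Archimedean2 by blast
    have "Np p (\<lambda>x. Rk m f x - T f x) < ennreal e" if m: "N \<le> m" for m
    proof -
      have "K * 3 / e < real m + 1" using N m by linarith
      then have "K * 3 < e * (real m + 1)" using e by (simp add: field_simps)
      then have lt: "K * (3 * dd m) < e" unfolding dd_def by (simp add: field_simps)
      have "ennreal (K * (3 * dd m)) < ennreal e" using lt e by (intro ennreal_lessI) auto
      with bnd[of m] show ?thesis by (rule le_less_trans)
    qed
    then show "eventually (\<lambda>m. Np p (\<lambda>x. Rk m f x - T f x) < ennreal e) sequentially"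
      unfolding eventually_sequentially by blast
  qed
  with RW show ?thesis by blast
qed


lemma sub_closure:
  fixes X :: "('a::euclidean_space \<Rightarrow> real) set"
  assumes p: "0 < p" and X: "X \<subseteq> Lp_plus p"
  shows "X \<subseteq> Lp_closure p X"
proof
  fix f assume f: "f \<in> X"
  have z: "lp_norm p (\<lambda>x. f x - f x) = 0" using p by (simp add: lp_norm_def)
  show "f \<in> Lp_closure p X" unfolding Lp_closure_def
    using f X z by (auto intro!: exI[of _ "\<lambda>k. f"])
qed

lemma closure_D:
  fixes X :: "('a::euclidean_space \<Rightarrow> real) set"
  assumes p: "0 < p" and f: "f \<in> Lp_closure p X"
  shows "f \<in> Lp_plus p \<and> (\<exists>g. (\<forall>k. g k \<in> X) \<and> evz (\<lambda>k. Np p (\<lambda>x. g k x - f x)))"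
proof -
  from f obtain g where a: "f \<in> Lp_plus p" "\<forall>k. g k \<in> X"
    and t: "((\<lambda>k. lp_norm p (\<lambda>x. g k x - f x)) \<longlonglongrightarrow> 0)" unfolding Lp_closure_def by blast
  have "evz (\<lambda>k. Np p (\<lambda>x. g k x - f x))" using lp_tendsto_iff[OF p, of "\<lambda>k x. g k x - f x"] t by simp
  with a show ?thesis by blast
qed

theorem lemma5p1:
  fixes p :: real
    and X :: "('a::euclidean_space \<Rightarrow> real) set"
    and T :: "('a \<Rightarrow> real) \<Rightarrow> ('a \<Rightarrow> real)"
    and W :: "(('a \<Rightarrow> real) \<Rightarrow> ('a \<Rightarrow> real)) set"
  assumes "1 \<le> p"
    and "X \<subseteq> Lp_plus p"
    and "rearrangement T"
    and "\<forall>S\<in>W. rearrangement S"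
  shows "(weakly_approximable p X W T \<longleftrightarrow> weakly_approximable p (Lp_closure p X) W T)
       \<and> (approximable p X W T \<longleftrightarrow> approximable p (Lp_closure p X) W T)
       \<and> (sequentially_approximable p X W T \<longleftrightarrow> sequentially_approximable p (Lp_closure p X) W T)"
proof -
  have p: "1 \<le> p" and T: "rearrangement T" and WR: "\<forall>S\<in>W. rearrangement S" using assms by auto
  have p0: "0 < p" using assms(1) by simp
  have sub: "X \<subseteq> Lp_closure p X" by (rule sub_closure[OF p0 assms(2)])
  have XL: "\<And>f. f \<in> X \<Longrightarrow> f \<in> Lp_plus p" using assms(2) by blast
  have cv: "\<And>h. ((\<lambda>k. lp_norm p (h k)) \<longlonglongrightarrow> 0) \<longleftrightarrow> evz (\<lambda>k. Np p (h k))"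
    by (rule lp_tendsto_iff[OF p0])
  show ?thesis
  proof (intro conjI iffI)
    assume wX: "weakly_approximable p X W T"
    show "weakly_approximable p (Lp_closure p X) W T" unfolding weakly_approximable_def
    proof
      fix f assume "f \<in> Lp_closure p X"
      then obtain g where f: "f \<in> Lp_plus p" and gX: "\<forall>k. g k \<in> X" and conv: "evz (\<lambda>k. Np p (\<lambda>x. g k x - f x))"
        using closure_D[OF p0] by blast
      have g: "\<And>j. g j \<in> Lp_plus p" using gX XL by blast
      have app: "\<exists>Tk. (\<forall>k. Tk k \<in> W) \<and> evz (\<lambda>k. Np p (\<lambda>x. Tk k (g j) x - T (g j) x))" for j
        using wX gX unfolding weakly_approximable_def cv by blast
      show "\<exists>Tk. (\<forall>k. Tk k \<in> W) \<and> ((\<lambda>k. lp_norm p (\<lambda>x. Tk k f x - T f x)) \<longlonglongrightarrow> 0)"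
        unfolding cv by (rule weakW[OF p T WR f g conv app])
    qed
  next
    assume "weakly_approximable p (Lp_closure p X) W T"
    then show "weakly_approximable p X W T" using sub unfolding weakly_approximable_def by blast
  next
    assume "approximable p X W T"
    then obtain Tk where TkW: "\<forall>k. Tk k \<in> W" and TkX: "\<forall>f\<in>X. evz (\<lambda>k. Np p (\<lambda>x. Tk k f x - T f x))"
      unfolding approximable_def cv by blast
    have R: "\<And>k. rearrangement (Tk k)" using TkW WR by blast
    show "approximable p (Lp_closure p X) W T" unfolding approximable_def cv
    proof (intro exI conjI ballI)
      show "\<forall>k. Tk k \<in> W" by (rule TkW)
      fix f assume "f \<in> Lp_closure p X"
      then obtain g where f: "f \<in> Lp_plus p" and gX: "\<forall>k. g k \<in> X" and conv: "evz (\<lambda>k. Np p (\<lambda>x. g k x - f x))"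
        using closure_D[OF p0] by blast
      have g: "\<And>j. g j \<in> Lp_plus p" using gX XL by blast
      have app: "evz (\<lambda>k. Np p (\<lambda>x. Tk k (g j) x - T (g j) x))" for j using TkX gX by blast
      show "evz (\<lambda>k. Np p (\<lambda>x. Tk k f x - T f x))" by (rule approxG[OF p T R f g conv app])
    qed
  next
    assume "approximable p (Lp_closure p X) W T"
    then show "approximable p X W T" using sub unfolding approximable_def by blast
  next
    assume "sequentially_approximable p X W T"
    then obtain S where SW: "\<forall>k. S k \<in> W" and SX: "\<forall>f\<in>X. evz (\<lambda>k. Np p (\<lambda>x. comp_upto S k f x - T f x))"
      unfolding sequentially_approximable_def cv by blast
    have R: "\<And>k. rearrangement (comp_upto S k)" using SW WR by (intro rearr_comp_upto) blast
    show "sequentially_approximable p (Lp_closure p X) W T" unfolding sequentially_approximable_def cv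
    proof (intro exI conjI ballI)
      show "\<forall>k. S k \<in> W" by (rule SW)
      fix f assume "f \<in> Lp_closure p X"
      then obtain g where f: "f \<in> Lp_plus p" and gX: "\<forall>k. g k \<in> X" and conv: "evz (\<lambda>k. Np p (\<lambda>x. g k x - f x))"
        using closure_D[OF p0] by blast
      have g: "\<And>j. g j \<in> Lp_plus p" using gX XL by blast
      have app: "evz (\<lambda>k. Np p (\<lambda>x. comp_upto S k (g j) x - T (g j) x))" for j using SX gX by blast
      show "evz (\<lambda>k. Np p (\<lambda>x. comp_upto S k f x - T f x))" by (rule approxG[OF p T R f g conv app])
    qed
  next
    assume "sequentially_approximable p (Lp_closure p X) W T"
    then show "sequentially_approximable p X W T" using sub unfolding sequentially_approximable_def by blast
  qed
qed

end
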